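(* Let $p$ be a prime and let $K$ be a spherically complete non-Archimedean field whose residue field $k$ has characteristic $p$. Assume that (i) the value group $\Gamma=|K^\times|$ is $p$-divisible, and (ii) the residue field $k$ is perfect. Then $K$ is a perfectoid field.
   Context: A non-Archimedean field is a field complete with respect to a nontrivial rank-one (real-valued) non-Archimedean absolute value $|\cdot|$. It is spherically complete if every decreasing sequence of closed balls has nonempty intersection. A perfectoid field is a non-Archimedean field $K$ with non-discrete value group, residue characteristic $p$, such that the Frobenius $x\mapsto x^p$ is surjective on $\mathcal{O}_K/p$, where $\mathcal{O}_K=\{x:|x|\le1\}$. *)

theory Defs
  imports Complex_Main "HOL-Computational_Algebra.Primes"
begin

text \<open>A field K (the whole type 'a) equipped with a real-valued absolute value v.\<close>

definition nonarch_abs :: "('a::field \<Rightarrow> real) \<Rightarrow> bool" where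
  "nonarch_abs v \<longleftrightarrow>
     (\<forall>x. v x \<ge> 0) \<and> (\<forall>x. v x = 0 \<longleftrightarrow> x = 0) \<and>
     (\<forall>x y. v (x * y) = v x * v y) \<and>
     (\<forall>x y. v (x + y) \<le> max (v x) (v y))"

definition nontrivial_abs :: "('a::field \<Rightarrow> real) \<Rightarrow> bool" where
  "nontrivial_abs v \<longleftrightarrow> (\<exists>x. x \<noteq> 0 \<and> v x \<noteq> 1)"

definition abs_cauchy :: "('a::field \<Rightarrow> real) \<Rightarrow> (nat \<Rightarrow> 'a) \<Rightarrow> bool" where
  "abs_cauchy v f \<longleftrightarrow> (\<forall>e>0. \<exists>N. \<forall>m\<ge>N. \<forall>n\<ge>N. v (f m - f n) < e)"

definition abs_converges :: "('a::field \<Rightarrow> real) \<Rightarrow> (nat \<Rightarrow> 'a) \<Rightarrow> bool" where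
  "abs_converges v f \<longleftrightarrow> (\<exists>L. \<forall>e>0. \<exists>N. \<forall>n\<ge>N. v (f n - L) < e)"

definition abs_complete :: "('a::field \<Rightarrow> real) \<Rightarrow> bool" where
  "abs_complete v \<longleftrightarrow> (\<forall>f. abs_cauchy v f \<longrightarrow> abs_converges v f)"

definition nonarch_field :: "('a::field \<Rightarrow> real) \<Rightarrow> bool" where
  "nonarch_field v \<longleftrightarrow> nonarch_abs v \<and> nontrivial_abs v \<and> abs_complete v"

definition closed_ball_v :: "('a::field \<Rightarrow> real) \<Rightarrow> 'a \<Rightarrow> real \<Rightarrow> 'a set" where
  "closed_ball_v v c r = {y. v (y - c) \<le> r}"

definition spherically_complete :: "('a::field \<Rightarrow> real) \<Rightarrow> bool" where
  "spherically_complete v \<longleftrightarrow>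
     (\<forall>(c::nat \<Rightarrow> 'a) (r::nat \<Rightarrow> real).
        (\<forall>n. r n > 0) \<longrightarrow>
        (\<forall>n. closed_ball_v v (c (Suc n)) (r (Suc n)) \<subseteq> closed_ball_v v (c n) (r n)) \<longrightarrow>
        (\<Inter>n. closed_ball_v v (c n) (r n)) \<noteq> {})"

text \<open>Valuation ring O = {x. v x \<le> 1}, maximal ideal m = {x. v x < 1}, residue field k = O/m.\<close>

text \<open>Residue field has characteristic p (p prime): p * 1 lies in the maximal ideal.\<close>
definition residue_char :: "('a::field \<Rightarrow> real) \<Rightarrow> nat \<Rightarrow> bool" where
  "residue_char v p \<longleftrightarrow> v (of_nat p) < 1"

definition value_group :: "('a::field \<Rightarrow> real) \<Rightarrow> real set" where
  "value_group v = {v x | x. x \<noteq> 0}"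

definition value_group_p_divisible :: "('a::field \<Rightarrow> real) \<Rightarrow> nat \<Rightarrow> bool" where
  "value_group_p_divisible v p \<longleftrightarrow> (\<forall>g\<in>value_group v. \<exists>h\<in>value_group v. h ^ p = g)"

text \<open>Residue field (of characteristic p) perfect: Frobenius surjective on O/m.\<close>
definition residue_field_perfect :: "('a::field \<Rightarrow> real) \<Rightarrow> nat \<Rightarrow> bool" where
  "residue_field_perfect v p \<longleftrightarrow>
     (\<forall>x. v x \<le> 1 \<longrightarrow> (\<exists>y. v y \<le> 1 \<and> v (y ^ p - x) < 1))"

definition value_group_nondiscrete :: "('a::field \<Rightarrow> real) \<Rightarrow> bool" where
  "value_group_nondiscrete v \<longleftrightarrow>
     (\<forall>e>0. \<exists>g\<in>value_group v. g \<noteq> 1 \<and> \<bar>g - 1\<bar> < e)"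

text \<open>Frobenius surjective on O/pO: x \<equiv> y^p mod pO, i.e. v(y^p - x) \<le> v p.\<close>
definition frobenius_surj_mod_p :: "('a::field \<Rightarrow> real) \<Rightarrow> nat \<Rightarrow> bool" where
  "frobenius_surj_mod_p v p \<longleftrightarrow>
     (\<forall>x. v x \<le> 1 \<longrightarrow> (\<exists>y. v y \<le> 1 \<and> v (y ^ p - x) \<le> v (of_nat p)))"

definition perfectoid_field :: "('a::field \<Rightarrow> real) \<Rightarrow> bool" where
  "perfectoid_field v \<longleftrightarrow>
     nonarch_field v \<and> value_group_nondiscrete v \<and>
     (\<exists>p. prime p \<and> residue_char v p \<and> frobenius_surj_mod_p v p)"

end

theory Submission
  imports Defs
begin

lemma na_ge0: "nonarch_abs v \<Longrightarrow> v x \<ge> 0"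
  by (simp add: nonarch_abs_def)
lemma na_zero: "nonarch_abs v \<Longrightarrow> v x = 0 \<longleftrightarrow> x = 0"
  by (simp add: nonarch_abs_def)
lemma na_mult: "nonarch_abs v \<Longrightarrow> v (x * y) = v x * v y"
  by (simp add: nonarch_abs_def)
lemma na_add: "nonarch_abs v \<Longrightarrow> v (x + y) \<le> max (v x) (v y)"
  by (simp add: nonarch_abs_def)

lemma na_one: assumes "nonarch_abs v" shows "v 1 = 1"
proof -
  have "v 1 = v 1 * v 1" using na_mult[OF assms, of 1 1] by simp
  moreover have "v 1 \<noteq> 0" using na_zero[OF assms, of 1] by simp
  ultimately show ?thesis by simp
qed

lemma na_minus: assumes "nonarch_abs v" shows "v (- x) = v x"
proof -
  have "v (-1) * v (-1) = 1" using na_mult[OF assms, of "-1" "-1"] na_one[OF assms] by simp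
  moreover have "v (-1) \<ge> 0" using na_ge0[OF assms] .
  ultimately have "v (-1) = 1"
  proof -
    have "(v (-1) - 1) * (v (-1) + 1) = 0" using \<open>v (-1) * v (-1) = 1\<close> by (simp add: algebra_simps)
    then show ?thesis using \<open>v (-1) \<ge> 0\<close> by auto
  qed
  then show ?thesis using na_mult[OF assms, of "-1" x] by simp
qed

lemma na_diff: assumes "nonarch_abs v" shows "v (x - y) \<le> max (v x) (v y)"
  using na_add[OF assms, of x "-y"] na_minus[OF assms, of y] by simp

lemma na_pow: assumes "nonarch_abs v" shows "v (x ^ n) = v x ^ n"
  by (induction n) (auto simp: na_one[OF assms] na_mult[OF assms])

lemma na_of_nat: assumes "nonarch_abs v" shows "v (of_nat n) \<le> 1"
proof (induction n)
  case 0 then show ?case using na_zero[OF assms, of 0] by simp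
next
  case (Suc n)
  have "v (of_nat (Suc n)) = v (of_nat n + 1)" by (simp add: add.commute)
  also have "\<dots> \<le> max (v (of_nat n)) (v 1)" by (rule na_add[OF assms])
  also have "\<dots> \<le> 1" using Suc na_one[OF assms] by simp
  finally show ?case .
qed

lemma na_sum: assumes "nonarch_abs v" "finite A" "\<And>k. k \<in> A \<Longrightarrow> v (g k) \<le> B" "B \<ge> 0"
  shows "v (sum g A) \<le> B"
  using assms(2,3)
proof (induction A rule: finite_induct)
  case empty then show ?case using na_zero[OF assms(1), of 0] assms(4) by simp
next
  case (insert a A)
  have "v (sum g (insert a A)) = v (g a + sum g A)" using insert by simp
  also have "\<dots> \<le> max (v (g a)) (v (sum g A))" by (rule na_add[OF assms(1)])
  finally have F: "v (sum g (insert a A)) \<le> max (v (g a)) (v (sum g A))" .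
  have "v (g a) \<le> B" using insert.prems by simp
  moreover have "v (sum g A) \<le> B" using insert by simp
  ultimately have "max (v (g a)) (v (sum g A)) \<le> B" by simp
  with F show ?case by (rule order_trans)
qed

lemma na_cross:
  assumes na: "nonarch_abs v" and p: "prime p" and s: "v s \<le> 1" and t: "v t \<le> 1"
  shows "v ((s + t) ^ p - s ^ p - t ^ p) \<le> v (of_nat p)"
proof -
  define g where "g k = of_nat (p choose k) * s ^ k * t ^ (p - k)" for k
  have p0: "p > 0" using p prime_gt_0_nat by blast
  have "(s + t) ^ p = (\<Sum>k\<le>p. g k)" unfolding g_def by (rule binomial_ring)
  also have "{..p} = insert 0 (insert p {1..<p})" using p0 by auto
  also have "sum g (insert 0 (insert p {1..<p})) = g 0 + (g p + sum g {1..<p})"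
    using p0 by simp
  finally have eq: "(s + t) ^ p - s ^ p - t ^ p = sum g {1..<p}"
    unfolding g_def by simp
  have "v (sum g {1..<p}) \<le> v (of_nat p)"
  proof (rule na_sum[OF na])
    fix k assume k: "k \<in> {1..<p}"
    have "p dvd (p choose k)" using k p by (intro dvd_choose_prime) auto
    then obtain m where m: "p choose k = p * m" by blast
    have "v (g k) = v (of_nat p) * v (of_nat m) * v s ^ k * v t ^ (p - k)"
      unfolding g_def m by (simp add: na_mult[OF na] na_pow[OF na])
    also have "\<dots> \<le> v (of_nat p) * 1 * 1 * 1"
      by (intro mult_mono power_le_one) (auto simp: na_ge0[OF na] na_of_nat[OF na] s t)
    finally show "v (g k) \<le> v (of_nat p)" by simp
  qed (auto simp: na_ge0[OF na])
  then show ?thesis using eq by simp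
qed


lemma na_improve:
  assumes na: "nonarch_abs v" and p: "prime p"
    and pd: "value_group_p_divisible v p" and rp: "residue_field_perfect v p"
    and x: "v x \<le> 1" and s: "v s \<le> 1" and big: "v (x - s ^ p) > v (of_nat p)"
  shows "\<exists>s'. v s' \<le> 1 \<and> v (x - s' ^ p) < v (x - s ^ p)"
proof -
  define r where "r = v (x - s ^ p)"
  have p0: "p > 0" using p prime_gt_0_nat by blast
  have vp0: "v (of_nat p) \<ge> 0" using na_ge0[OF na] .
  have r0: "r > 0" using big vp0 unfolding r_def by linarith
  have nz: "x - s ^ p \<noteq> 0" using r0 na_zero[OF na, of "x - s ^ p"] unfolding r_def by simp
  have rvg: "r \<in> value_group v" unfolding value_group_def r_def using nz by blast
  obtain h where h: "h \<in> value_group v" "h ^ p = r" using pd rvg unfolding value_group_p_divisible_def by blast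
  obtain c where c: "c \<noteq> 0" "v c = h" using h(1) unfolding value_group_def by blast
  have "v (s ^ p) \<le> 1" using s na_ge0[OF na, of s] by (simp add: na_pow[OF na] power_le_one)
  then have r1: "r \<le> 1" using na_diff[OF na, of x "s ^ p"] x unfolding r_def by simp
  have h0: "h \<ge> 0" using c(2) na_ge0[OF na, of c] by simp
  have h1: "h \<le> 1" using power_le_one_iff[OF h0, of p] h(2) r1 p0 by simp
  have vcp: "v (c ^ p) = r" using c h by (simp add: na_pow[OF na])
  have cp0: "c ^ p \<noteq> 0" using c by simp
  define a where "a = (x - s ^ p) / c ^ p"
  have ac: "a * c ^ p = x - s ^ p" unfolding a_def using cp0 by simp
  have "v a * v (c ^ p) = v (x - s ^ p)"
    using na_mult[OF na, of a "c ^ p"] ac by simp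
  then have va: "v a = 1" using vcp r0 unfolding r_def by simp
  have "v a \<le> 1" using va by simp
  then obtain d where d: "v d \<le> 1" "v (d ^ p - a) < 1" using rp unfolding residue_field_perfect_def by blast
  define t where "t = c * d"
  have vt: "v t \<le> 1" unfolding t_def using na_mult[OF na, of c d] c h1 d(1) na_ge0[OF na, of d]
    by (simp add: mult_le_one na_ge0[OF na])
  have tp: "t ^ p = c ^ p * d ^ p" unfolding t_def by (rule power_mult_distrib)
  have "t ^ p - (x - s ^ p) = c ^ p * (d ^ p - a)"
    unfolding tp ac[symmetric] by (simp add: right_diff_distrib mult.commute)
  then have "v (t ^ p - (x - s ^ p)) = r * v (d ^ p - a)" using vcp by (simp add: na_mult[OF na])
  also have "\<dots> < r * 1" using d(2) r0 by (intro mult_strict_left_mono) auto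
  finally have e1: "v (x - s ^ p - t ^ p) < r"
    using na_minus[OF na, of "t ^ p - (x - s ^ p)"] by (simp add: algebra_simps)
  have e2: "v ((s + t) ^ p - s ^ p - t ^ p) < r"
    using na_cross[OF na p s vt] big unfolding r_def by simp
  have "x - (s + t) ^ p = (x - s ^ p - t ^ p) - ((s + t) ^ p - s ^ p - t ^ p)" by (simp add: algebra_simps)
  then have "v (x - (s + t) ^ p) \<le> max (v (x - s ^ p - t ^ p)) (v ((s + t) ^ p - s ^ p - t ^ p))"
    using na_diff[OF na, of "x - s ^ p - t ^ p" "(s + t) ^ p - s ^ p - t ^ p"] by simp
  then have "v (x - (s + t) ^ p) < r" using e1 e2 by simp
  moreover have "v (s + t) \<le> 1" using na_add[OF na, of s t] s vt by simp
  ultimately show ?thesis unfolding r_def by blast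
qed

lemma na_step:
  assumes na: "nonarch_abs v" and p: "prime p" and s: "v s \<le> 1" and s': "v s' \<le> 1"
  shows "v (s' - s) ^ p \<le> max (max (v (x - s ^ p)) (v (x - s' ^ p))) (v (of_nat p))"
proof -
  define t where "t = s' - s"
  have vt: "v t \<le> 1" unfolding t_def using na_diff[OF na, of s' s] s s' by simp
  have s'eq: "s' = s + t" unfolding t_def by simp
  have "t ^ p = ((x - s ^ p) - (x - s' ^ p)) - ((s + t) ^ p - s ^ p - t ^ p)"
    unfolding s'eq by (simp add: algebra_simps)
  then have "v (t ^ p) \<le> max (v ((x - s ^ p) - (x - s' ^ p))) (v ((s + t) ^ p - s ^ p - t ^ p))"
    using na_diff[OF na, of "(x - s ^ p) - (x - s' ^ p)" "(s + t) ^ p - s ^ p - t ^ p"] by simp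
  moreover have "v ((x - s ^ p) - (x - s' ^ p)) \<le> max (v (x - s ^ p)) (v (x - s' ^ p))"
    by (rule na_diff[OF na])
  moreover have "v ((s + t) ^ p - s ^ p - t ^ p) \<le> v (of_nat p)" by (rule na_cross[OF na p s vt])
  ultimately show ?thesis unfolding t_def by (simp add: na_pow[OF na])
qed

lemma na_limit:
  assumes na: "nonarch_abs v" and p: "prime p" and s: "v s \<le> 1" and z: "v z \<le> 1"
    and d: "v (z - s) ^ p \<le> \<delta>"
  shows "v (x - z ^ p) \<le> max (max (v (x - s ^ p)) \<delta>) (v (of_nat p))"
proof -
  define t where "t = z - s"
  have vt: "v t \<le> 1" unfolding t_def using na_diff[OF na, of z s] s z by simp
  have zeq: "z = s + t" unfolding t_def by simp
  have "x - z ^ p = ((x - s ^ p) - t ^ p) - ((s + t) ^ p - s ^ p - t ^ p)"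
    unfolding zeq by (simp add: algebra_simps)
  then have "v (x - z ^ p) \<le> max (v ((x - s ^ p) - t ^ p)) (v ((s + t) ^ p - s ^ p - t ^ p))"
    using na_diff[OF na, of "(x - s ^ p) - t ^ p" "(s + t) ^ p - s ^ p - t ^ p"] by simp
  moreover have "v ((x - s ^ p) - t ^ p) \<le> max (v (x - s ^ p)) (v (t ^ p))"
    by (rule na_diff[OF na])
  moreover have "v ((s + t) ^ p - s ^ p - t ^ p) \<le> v (of_nat p)" by (rule na_cross[OF na p s vt])
  moreover have "v (t ^ p) \<le> \<delta>" using d unfolding t_def by (simp add: na_pow[OF na])
  ultimately show ?thesis by linarith
qed


lemma na_frob:
  assumes na: "nonarch_abs v" and p: "prime p" and sc: "spherically_complete v"
    and pd: "value_group_p_divisible v p" and rp: "residue_field_perfect v p"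
    and x: "v x \<le> 1"
  shows "\<exists>y. v y \<le> 1 \<and> v (y ^ p - x) \<le> v (of_nat p)"
proof (rule ccontr)
  assume neg: "\<not> ?thesis"
  have H: "v (x - y ^ p) > v (of_nat p)" if "v y \<le> 1" for y
  proof -
    have "\<not> v (y ^ p - x) \<le> v (of_nat p)" using neg that by blast
    moreover have "v (x - y ^ p) = v (y ^ p - x)" using na_minus[OF na, of "y ^ p - x"] by simp
    ultimately show ?thesis by simp
  qed
  have p0: "p > 0" using p prime_gt_0_nat by blast
  define F where "F = {v (x - y ^ p) | y. v y \<le> 1}"
  define \<mu> where "\<mu> = Inf F"
  have "v (0::'a) \<le> 1" using na_zero[OF na, of 0] by simp
  then have "v (x - 0 ^ p) \<in> F" unfolding F_def by blast
  then have Fne: "F \<noteq> {}" by blast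
  have Fbdd: "bdd_below F" unfolding F_def bdd_below_def using na_ge0[OF na] by blast
  have low: "\<And>y. v y \<le> 1 \<Longrightarrow> \<mu> \<le> v (x - y ^ p)"
    unfolding \<mu>_def using Fbdd by (intro cInf_lower) (auto simp: F_def)
  have vpmu: "v (of_nat p) \<le> \<mu>" unfolding \<mu>_def
    using Fne H by (intro cInf_greatest) (auto simp: F_def less_imp_le)
  obtain y0 where y0: "v y0 \<le> 1" "v (y0 ^ p - x) < 1" using rp x unfolding residue_field_perfect_def by blast
  have "v (x - y0 ^ p) < 1" using y0(2) na_minus[OF na, of "y0 ^ p - x"] by simp
  then have mu1: "\<mu> < 1" using low[OF y0(1)] by linarith
  have vp0: "v (of_nat p) \<ge> 0" using na_ge0[OF na] .
  define d where "d = 1 - \<mu>"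
  have d0: "d > 0" unfolding d_def using mu1 by simp
  define \<delta> where "\<delta> n = \<mu> + d / (real n + 1)" for n
  have \<delta>pos: "\<delta> n > \<mu>" for n unfolding \<delta>_def using d0 by simp
  have \<delta>mono: "\<delta> (Suc n) \<le> \<delta> n" for n unfolding \<delta>_def using d0
    by (intro add_left_mono divide_left_mono) auto
  have \<delta>0: "\<delta> 0 = 1" unfolding \<delta>_def d_def by simp
  have "\<exists>y. v y \<le> 1 \<and> v (x - y ^ p) < \<delta> n" for n
  proof -
    have "Inf F < \<delta> n" using \<delta>pos[of n] unfolding \<mu>_def by simp
    from cInf_lessD[OF Fne this] show ?thesis unfolding F_def by blast
  qed
  then have "\<forall>n. \<exists>y. v y \<le> 1 \<and> v (x - y ^ p) < \<delta> n" by blast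
  then have "\<exists>s. \<forall>n. v (s n) \<le> 1 \<and> v (x - s n ^ p) < \<delta> n" by (rule choice)
  then obtain s where s0: "\<forall>n. v (s n) \<le> 1 \<and> v (x - s n ^ p) < \<delta> n" by blast
  have s: "\<And>n. v (s n) \<le> 1" "\<And>n. v (x - s n ^ p) < \<delta> n" using s0 by auto
  define \<rho> where "\<rho> n = root p (\<delta> n)" for n
  have \<rho>pos: "\<rho> n > 0" for n unfolding \<rho>_def using \<delta>pos[of n] vpmu vp0 p0 by simp
  have \<rho>p: "\<rho> n ^ p = \<delta> n" for n unfolding \<rho>_def using \<delta>pos[of n] vpmu vp0 p0 by simp
  have \<rho>mono: "\<rho> (Suc n) \<le> \<rho> n" for n unfolding \<rho>_def using \<delta>mono p0 by simp
  have le_root: "v a \<le> \<rho> n" if "v a ^ p \<le> \<delta> n" for a n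
  proof -
    have "v a = root p (v a ^ p)" using p0 na_ge0[OF na, of a] by (simp add: real_root_power_cancel)
    also have "\<dots> \<le> \<rho> n" unfolding \<rho>_def using that p0 by simp
    finally show ?thesis .
  qed
  have nest: "closed_ball_v v (s (Suc n)) (\<rho> (Suc n)) \<subseteq> closed_ball_v v (s n) (\<rho> n)" for n
  proof
    fix y assume "y \<in> closed_ball_v v (s (Suc n)) (\<rho> (Suc n))"
    then have y1: "v (y - s (Suc n)) \<le> \<rho> n" using \<rho>mono[of n] unfolding closed_ball_v_def by simp
    have "v (s (Suc n) - s n) ^ p \<le> max (max (v (x - s n ^ p)) (v (x - s (Suc n) ^ p))) (v (of_nat p))"
      by (rule na_step[OF na p s(1) s(1)])
    also have "\<dots> \<le> \<delta> n" using s(2)[of n] s(2)[of "Suc n"] \<delta>mono[of n] vpmu \<delta>pos[of n] by simp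
    finally have y2: "v (s (Suc n) - s n) \<le> \<rho> n" by (rule le_root)
    have "y - s n = (y - s (Suc n)) + (s (Suc n) - s n)" by simp
    then have "v (y - s n) \<le> max (v (y - s (Suc n))) (v (s (Suc n) - s n))" using na_add[OF na, of "y - s (Suc n)" "s (Suc n) - s n"] by simp
    then show "y \<in> closed_ball_v v (s n) (\<rho> n)" unfolding closed_ball_v_def using y1 y2 by simp
  qed
  have "(\<Inter>n. closed_ball_v v (s n) (\<rho> n)) \<noteq> {}"
  proof -
    show ?thesis using sc[unfolded spherically_complete_def, rule_format, of \<rho> s, OF \<rho>pos nest] .
  qed
  then obtain z where z: "\<And>n. v (z - s n) \<le> \<rho> n" unfolding closed_ball_v_def by blast
  have zp: "v (z - s n) ^ p \<le> \<delta> n" for n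
    using power_mono[OF z[of n] na_ge0[OF na], of p] \<rho>p[of n] by simp
  have "\<rho> 0 = 1" unfolding \<rho>_def \<delta>0 using p0 by simp
  then have "v (z - s 0) \<le> 1" using z[of 0] by simp
  moreover have "z = s 0 + (z - s 0)" by simp
  ultimately have vz: "v z \<le> 1" using na_add[OF na, of "s 0" "z - s 0"] s(1)[of 0] by simp
  have fz: "v (x - z ^ p) \<le> \<delta> n" for n
  proof -
    have "v (x - z ^ p) \<le> max (max (v (x - s n ^ p)) (\<delta> n)) (v (of_nat p))"
      by (rule na_limit[OF na p s(1) vz zp])
    then show ?thesis using s(2)[of n] vpmu \<delta>pos[of n] by simp
  qed
  have fzmu: "v (x - z ^ p) \<le> \<mu>"
  proof (rule ccontr)
    assume "\<not> ?thesis"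
    then have g: "v (x - z ^ p) - \<mu> > 0" by simp
    obtain n :: nat where n: "d / (v (x - z ^ p) - \<mu>) < real n" using reals_Archimedean2 by blast
    then have "d < real n * (v (x - z ^ p) - \<mu>)" using g by (simp add: divide_less_eq)
    also have "\<dots> \<le> (real n + 1) * (v (x - z ^ p) - \<mu>)" using g by (intro mult_right_mono) auto
    finally have "d / (real n + 1) < v (x - z ^ p) - \<mu>"
      by (simp add: divide_less_eq mult.commute)
    then show False using fz[of n] unfolding \<delta>_def by simp
  qed
  obtain z' where z': "v z' \<le> 1" "v (x - z' ^ p) < v (x - z ^ p)"
    using na_improve[OF na p pd rp x vz H[OF vz]] by blast
  show False using low[OF z'(1)] z'(2) fzmu by simp
qed


lemma na_nondiscrete:
  assumes na: "nonarch_abs v" and nt: "nontrivial_abs v" and p: "prime p"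
    and pd: "value_group_p_divisible v p"
  shows "value_group_nondiscrete v"
  unfolding value_group_nondiscrete_def
proof (intro allI impI)
  fix e :: real assume e: "e > 0"
  obtain x0 where x0: "x0 \<noteq> 0" "v x0 \<noteq> 1" using nt unfolding nontrivial_abs_def by blast
  define g0 where "g0 = v x0"
  have g0pos: "g0 > 0" unfolding g0_def using x0 na_zero[OF na, of x0] na_ge0[OF na, of x0] by simp
  have g0vg: "g0 \<in> value_group v" unfolding g0_def value_group_def using x0 by blast
  have vgpos: "g > 0" if gvg: "g \<in> value_group v" for g
  proof -
    obtain y where y: "g = v y" "y \<noteq> 0" using gvg unfolding value_group_def by blast
    then show ?thesis using na_zero[OF na, of y] na_ge0[OF na, of y] by simp
  qed
  have ex: "\<exists>h\<in>value_group v. h ^ (p ^ n) = g0" for n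
  proof (induction n)
    case 0 then show ?case using g0vg by auto
  next
    case (Suc n)
    then obtain h where h: "h \<in> value_group v" "h ^ (p ^ n) = g0" by blast
    then obtain h' where h': "h' \<in> value_group v" "h' ^ p = h"
      using pd unfolding value_group_p_divisible_def by blast
    have "h' ^ (p ^ Suc n) = (h' ^ p) ^ (p ^ n)" by (simp add: power_mult)
    then show ?case using h h' by auto
  qed
  have p1: "p > 1" using p prime_gt_1_nat by blast
  have sm: "strict_mono (\<lambda>n::nat. p ^ n)"
    by (rule strict_monoI) (use p1 power_strict_increasing in auto)
  have lim: "((\<lambda>n. root n g0) \<circ> (\<lambda>n. p ^ n)) \<longlonglongrightarrow> 1"
    by (rule LIMSEQ_subseq_LIMSEQ[OF LIMSEQ_root_const[OF g0pos] sm])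
  obtain no where no: "\<And>n. n \<ge> no \<Longrightarrow> norm (((\<lambda>n. root n g0) \<circ> (\<lambda>n. p ^ n)) n - 1) < e"
    using LIMSEQ_D[OF lim e] by blast
  obtain h where h: "h \<in> value_group v" "h ^ (p ^ no) = g0" using ex by blast
  have "root (p ^ no) g0 = h"
    using real_root_pos_unique[of "p ^ no" h g0] h vgpos[OF h(1)] p1 by simp
  then have "\<bar>h - 1\<bar> < e" using no[of no] by simp
  moreover have "h \<noteq> 1" using h(2) x0(2) unfolding g0_def by auto
  ultimately show "\<exists>g\<in>value_group v. g \<noteq> 1 \<and> \<bar>g - 1\<bar> < e" using h(1) by blast
qed

theorem theorem5p5:
  fixes v :: "'a::field \<Rightarrow> real" and p :: nat
  assumes "prime p"
    and "nonarch_field v"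
    and "spherically_complete v"
    and "residue_char v p"
    and "value_group_p_divisible v p"
    and "residue_field_perfect v p"
  shows "perfectoid_field v"
proof -
  have na: "nonarch_abs v" and nt: "nontrivial_abs v" using assms(2) unfolding nonarch_field_def by auto
  have "frobenius_surj_mod_p v p" unfolding frobenius_surj_mod_p_def
    using na_frob[OF na assms(1) assms(3) assms(5) assms(6)] by blast
  then show ?thesis unfolding perfectoid_field_def
    using assms(1,2,4) na_nondiscrete[OF na nt assms(1) assms(5)] by blast
qed

end
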